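(* Let $J\in\mathbb{R}^{m\times n}$ have full column rank, let $H\in\mathbb{R}^{m\times m}$ be symmetric positive definite, $q\in\mathbb{R}^m$, $c\in\mathbb{R}$, and consider minimizing $L(\theta)=\mathcal{L}(J\theta)$ with $\mathcal{L}(v)=\tfrac12 v^\top Hv+v^\top q+c$. Assume strong consistency: (1) there is $\theta^*$ with $J\theta^*=\arg\min_v\mathcal{L}(v)$ (equivalently $HJ\theta^*+q=0$), and (2) $\mathrm{range}(HJ)\subseteq\mathrm{range}(J)$. Consider SNGD $$\theta_{t+1}=\theta_t-\eta\,J_S^{+(\lambda)}(H_SJ\theta_t+q_S),$$ with batch size $k$, regularization $\lambda\ge0$, step size $\eta>0$, where at each iteration $S\subseteq\{1,\dots,m\}$, $|S|=k$, is drawn uniformly without replacement, independently across iterations. Let $P(S)=J_S^{+(\lambda)}J_S$, $\overline{P}=\mathbb{E}_S[P(S)]$, $M=\overline{P}J^+HJ$, and let $\xi(\lambda)$ be the minimum real part of any eigenvalue of $M$ (as a function of $\lambda$). Then: 1. For fixed $\lambda$, if $\xi(\lambda)<0$, then there exists an initial guess $\theta_0$ such that SNGD is divergent (does not converge to $\theta^*$) for every choice of $\eta>0$. 2. Conversely, there exists $\lambda_0$ such that for every $\lambda>\lambda_0$ we have $\xi(\lambda)>0$ and SNGD is convergent (to $\theta^*$, in mean square) for every initial guess $\theta_0$ provided the step size $\eta$ is small enough.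
   Context: $J_S$, $H_S$ denote the rows of $J$, $H$ indexed by $S$, and $q_S$ the corresponding entries of $q$. $J_S^{+(\lambda)}=(J_S^\top J_S+\lambda I)^{-1}J_S^\top=J_S^\top(J_SJ_S^\top+\lambda I)^{-1}$ (Moore–Penrose pseudoinverse when $\lambda=0$), and $J^+=(J^\top J)^{-1}J^\top$. *)

theory Defs
  imports "HOL-Analysis.Analysis" "HOL-Probability.Probability"
begin

text \<open>Row selection: the m x m diagonal 0/1 matrix keeping exactly the rows indexed by S.
  J_S is represented as rowsel S ** J (rows outside S set to zero).\<close>
definition rowsel :: "'m::finite set \<Rightarrow> real^'m^'m" where
  "rowsel S = (\<chi> i j. if i = j \<and> i \<in> S then 1 else 0)"

definition mp_pinv :: "real^'n::finite^'m::finite \<Rightarrow> real^'m^'n" where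
  "mp_pinv A = (THE X. A ** X ** A = A \<and> X ** A ** X = X \<and>
       transpose (A ** X) = A ** X \<and> transpose (X ** A) = X ** A)"

definition reg_pinv :: "real \<Rightarrow> real^'n::finite^'m::finite \<Rightarrow> real^'m^'n" where
  "reg_pinv lam A = (if lam = 0 then mp_pinv A
       else matrix_inv (transpose A ** A + mat lam) ** transpose A)"

definition batches :: "nat \<Rightarrow> 'm::finite set set" where
  "batches k = {S. card S = k}"

definition Pmat :: "real \<Rightarrow> real^'n::finite^'m::finite \<Rightarrow> 'm set \<Rightarrow> real^'n^'n" where
  "Pmat lam J S = reg_pinv lam (rowsel S ** J) ** (rowsel S ** J)"

definition Pbar :: "real \<Rightarrow> real^'n::finite^'m::finite \<Rightarrow> nat \<Rightarrow> real^'n^'n" where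
  "Pbar lam J k = (1 / real (card (batches k :: 'm set set))) *\<^sub>R (\<Sum>S\<in>batches k. Pmat lam J S)"

definition Jplus :: "real^'n::finite^'m::finite \<Rightarrow> real^'m^'n" where
  "Jplus J = matrix_inv (transpose J ** J) ** transpose J"

definition Mmat :: "real \<Rightarrow> real^'n::finite^'m::finite \<Rightarrow> real^'m^'m \<Rightarrow> nat \<Rightarrow> real^'n^'n" where
  "Mmat lam J H k = Pbar lam J k ** Jplus J ** H ** J"

definition is_eigenvalue :: "real^'n::finite^'n \<Rightarrow> complex \<Rightarrow> bool" where
  "is_eigenvalue M \<mu> \<longleftrightarrow> (\<exists>v::complex^'n. v \<noteq> 0 \<and>
       (\<chi> i j. complex_of_real (M $ i $ j)) *v v = \<mu> *s v)"

definition xi :: "real^'n::finite^'m::finite \<Rightarrow> real^'m^'m \<Rightarrow> nat \<Rightarrow> real \<Rightarrow> real" where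
  "xi J H k lam = Min {Re \<mu> | \<mu>. is_eigenvalue (Mmat lam J H k) \<mu>}"

definition quad_loss :: "real^'m::finite^'m \<Rightarrow> real^'m \<Rightarrow> real \<Rightarrow> real^'m \<Rightarrow> real" where
  "quad_loss H q c v = (1/2) * (v \<bullet> (H *v v)) + v \<bullet> q + c"

definition sngd_step :: "real \<Rightarrow> real \<Rightarrow> real^'n::finite^'m::finite \<Rightarrow> real^'m^'m \<Rightarrow> real^'m
      \<Rightarrow> 'm set \<Rightarrow> real^'n \<Rightarrow> real^'n" where
  "sngd_step lam eta J H q S \<theta> =
     \<theta> - eta *\<^sub>R (reg_pinv lam (rowsel S ** J) *v (rowsel S *v ((H ** J) *v \<theta> + q)))"

primrec sngd_pmf :: "real \<Rightarrow> real \<Rightarrow> real^'n::finite^'m::finite \<Rightarrow> real^'m^'m \<Rightarrow> real^'m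
      \<Rightarrow> nat \<Rightarrow> real^'n \<Rightarrow> nat \<Rightarrow> (real^'n) pmf" where
  "sngd_pmf lam eta J H q k \<theta>0 0 = return_pmf \<theta>0"
| "sngd_pmf lam eta J H q k \<theta>0 (Suc t) =
     bind_pmf (sngd_pmf lam eta J H q k \<theta>0 t)
       (\<lambda>\<theta>. map_pmf (\<lambda>S. sngd_step lam eta J H q S \<theta>) (pmf_of_set (batches k)))"

definition msq_err :: "real \<Rightarrow> real \<Rightarrow> real^'n::finite^'m::finite \<Rightarrow> real^'m^'m \<Rightarrow> real^'m
      \<Rightarrow> nat \<Rightarrow> real^'n \<Rightarrow> real^'n \<Rightarrow> nat \<Rightarrow> real" where
  "msq_err lam eta J H q k \<theta>0 \<theta>s t =
     measure_pmf.expectation (sngd_pmf lam eta J H q k \<theta>0 t) (\<lambda>\<theta>. (norm (\<theta> - \<theta>s))\<^sup>2)"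

end

theory Submission
  imports Defs "HOL-Computational_Algebra.Fundamental_Theorem_Algebra"
begin


lemma d1: fixes p :: "'a::comm_ring_1 poly" assumes "degree p \<le> n" shows "degree ([:a, b:] * p) \<le> Suc n"
  using degree_mult_le[of "[:a, b:]" p] assms degree_pCons_le[of a "[:b:]"] by simp

lemma prod_lin:
  fixes a b :: "'i \<Rightarrow> 'a::comm_ring_1"
  assumes "finite I"
  shows "degree (\<Prod>i\<in>I. [:a i, b i:]) \<le> card I \<and> coeff (\<Prod>i\<in>I. [:a i, b i:]) (card I) = (\<Prod>i\<in>I. b i)"
  using assms
proof (induction I rule: finite_induct)
  case empty
  then show ?case by simp
next
  case (insert x F)
  let ?Q = "\<Prod>i\<in>F. [:a i, b i:]"
  have eq: "(\<Prod>i\<in>insert x F. [:a i, b i:]) = [:a x, b x:] * ?Q" using insert by simp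
  have d1: "degree ([:a x, b x:] * ?Q) \<le> Suc (card F)"
    using d1 insert.IH by blast
  have c0: "coeff ?Q (Suc (card F)) = 0" using insert.IH by (simp add: coeff_eq_0)
  have "coeff ([:a x, b x:] * ?Q) (Suc (card F)) = b x * coeff ?Q (card F)"
    by (simp add: mult_pCons_left c0)
  then show ?case using eq d1 insert by simp
qed

definition cmat :: "real^'n::finite^'n \<Rightarrow> complex^'n^'n" where
  "cmat M = (\<chi> i j. complex_of_real (M $ i $ j))"

definition shiftm :: "real^'n::finite^'n \<Rightarrow> complex \<Rightarrow> complex^'n^'n" where
  "shiftm M \<mu> = (\<chi> i j. cmat M $ i $ j - (if i = j then \<mu> else 0))"

lemma shiftm_mult: "shiftm M \<mu> *v v = cmat M *v v - \<mu> *s v"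
proof -
  have "(\<Sum>j\<in>UNIV. (cmat M $ i $ j - (if i = j then \<mu> else 0)) * v $ j) = (\<Sum>j\<in>UNIV. cmat M $ i $ j * v $ j) - \<mu> * v $ i" for i
    by (simp add: left_diff_distrib sum_subtractf if_distrib[of "\<lambda>x. x * _"] sum.delta)
  then show ?thesis by (simp add: vec_eq_iff shiftm_def matrix_vector_mult_def)
qed

lemma eig_det: "is_eigenvalue M \<mu> \<longleftrightarrow> det (shiftm M \<mu>) = 0"
proof -
  have "is_eigenvalue M \<mu> \<longleftrightarrow> \<not> (\<forall>x. shiftm M \<mu> *v x = 0 \<longrightarrow> x = 0)"
    unfolding is_eigenvalue_def shiftm_mult cmat_def by auto
  also have "\<dots> \<longleftrightarrow> \<not> invertible (shiftm M \<mu>)"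
    using matrix_left_invertible_ker[of "shiftm M \<mu>"] invertible_left_inverse[of "shiftm M \<mu>"] by blast
  also have "\<dots> \<longleftrightarrow> det (shiftm M \<mu>) = 0" using invertible_det_nz by blast
  finally show ?thesis .
qed

definition charp :: "real^'n::finite^'n \<Rightarrow> complex poly" where
  "charp M = (\<Sum>p\<in>{p. p permutes (UNIV::'n set)}. of_int (sign p) *
      (\<Prod>i\<in>UNIV. [:cmat M $ i $ p i, - (if p i = i then 1 else 0):]))"

lemma poly_charp: "poly (charp M) \<mu> = det (shiftm M \<mu>)"
proof -
  have "poly [:cmat M $ i $ p i, - (if p i = i then 1 else 0):] \<mu> = shiftm M \<mu> $ i $ p i" for p i
    by (simp add: shiftm_def)
  then show ?thesis unfolding charp_def det_def poly_sum poly_prod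
    by (simp add: poly_prod)
qed

lemma charp_coeff: "coeff (charp M) CARD('n) = (-1) ^ CARD('n)" and charp_deg: "degree (charp M) \<le> CARD('n)"
  for M :: "real^'n::finite^'n"
proof -
  let ?F = "\<lambda>p. \<Prod>i\<in>(UNIV::'n set). [:cmat M $ i $ p i, - (if p i = i then 1 else 0::complex):]"
  have dF: "degree (?F p) \<le> CARD('n)" for p using prod_lin[of "UNIV::'n set" "\<lambda>i. cmat M $ i $ p i" "\<lambda>i. - (if p i = i then 1 else 0)"] by auto
  have cF: "coeff (?F p) CARD('n) = (if p = id then (-1)^CARD('n) else 0)" for p
  proof -
    have "coeff (?F p) CARD('n) = (\<Prod>i\<in>(UNIV::'n set). - (if p i = i then 1 else 0::complex))"
      using prod_lin[of "UNIV::'n set" "\<lambda>i. cmat M $ i $ p i" "\<lambda>i. - (if p i = i then 1 else 0)"] by auto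
    also have "\<dots> = (if p = id then (-1)^CARD('n) else 0)"
    proof (cases "p = id")
      case True then show ?thesis by simp
    next
      case False
      then obtain i where "p i \<noteq> i" by (auto simp: fun_eq_iff)
      then have "(\<Prod>i\<in>(UNIV::'n set). - (if p i = i then 1 else 0::complex)) = 0"
        by (intro prod_zero[of UNIV]) auto
      then show ?thesis using False by simp
    qed
    finally show ?thesis .
  qed
  have "coeff (charp M) CARD('n) = (\<Sum>p\<in>{p. p permutes (UNIV::'n set)}. of_int (sign p) * coeff (?F p) CARD('n))"
    unfolding charp_def by (simp add: coeff_sum of_int_poly)
  also have "\<dots> = (\<Sum>p\<in>{p. p permutes (UNIV::'n set)}. if p = id then (-1)^CARD('n) else 0)"
    by (rule sum.cong) (auto simp: cF sign_id)
  also have "\<dots> = (-1)^CARD('n)" by (simp add: permutes_id)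
  finally show "coeff (charp M) CARD('n) = (-1) ^ CARD('n)" .
  show "degree (charp M) \<le> CARD('n)"
    unfolding charp_def
    by (rule degree_sum_le) (auto intro: order.trans[OF degree_mult_le] simp: dF)
qed

lemma charp_ne: "charp M \<noteq> 0" using charp_coeff[of M] by auto

lemma charp_degree: "degree (charp M) = CARD('n)" for M :: "real^'n::finite^'n"
proof -
  have "coeff (charp M) CARD('n) \<noteq> 0" using charp_coeff[of M] by simp
  then show ?thesis using charp_deg[of M] le_degree by (metis le_antisym)
qed

lemma eig_finite: "finite {\<mu>. is_eigenvalue M \<mu>}"
  using poly_roots_finite[OF charp_ne[of M]] by (simp add: eig_det poly_charp)

lemma eig_exists: "\<exists>\<mu>. is_eigenvalue M \<mu>" for M :: "real^'n::finite^'n"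
proof -
  have "\<not> constant (poly (charp M))" using charp_degree[of M] by (simp add: constant_degree)
  then obtain z where "poly (charp M) z = 0" using fundamental_theorem_of_algebra by blast
  then show ?thesis by (auto simp: eig_det poly_charp)
qed

lemma xi_set: "finite {Re \<mu> | \<mu>. is_eigenvalue M \<mu>}" "{Re \<mu> | \<mu>. is_eigenvalue M \<mu>} \<noteq> {}"
  for M :: "real^'n::finite^'n"
proof -
  have "{Re \<mu> | \<mu>. is_eigenvalue M \<mu>} = Re ` {\<mu>. is_eigenvalue M \<mu>}" by auto
  then show "finite {Re \<mu> | \<mu>. is_eigenvalue M \<mu>}" using finite_imageI[OF eig_finite[of M]] by simp
  show "{Re \<mu> | \<mu>. is_eigenvalue M \<mu>} \<noteq> {}" using eig_exists[of M] by auto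
qed

lemma eig_real:
  fixes M :: "real^'n::finite^'n"
  assumes "is_eigenvalue M \<mu>"
  shows "\<exists>a b. (a \<noteq> 0 \<or> b \<noteq> 0) \<and> M *v a = Re \<mu> *\<^sub>R a - Im \<mu> *\<^sub>R b \<and>
      M *v b = Im \<mu> *\<^sub>R a + Re \<mu> *\<^sub>R b"
proof -
  obtain v :: "complex^'n" where v0: "v \<noteq> 0" and ev: "(\<chi> i j. complex_of_real (M $ i $ j)) *v v = \<mu> *s v"
    using assms unfolding is_eigenvalue_def by blast
  define a where "a = (\<chi> i. Re (v $ i))"
  define b where "b = (\<chi> i. Im (v $ i))"
  have comp: "(\<Sum>j\<in>UNIV. complex_of_real (M $ i $ j) * v $ j) = \<mu> * v $ i" for i
    using arg_cong[OF ev, of "\<lambda>x. x $ i"] by (simp add: matrix_vector_mult_def)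
  have "(M *v a) $ i = (Re \<mu> *\<^sub>R a - Im \<mu> *\<^sub>R b) $ i" for i
    using arg_cong[OF comp[of i], of Re] by (simp add: matrix_vector_mult_def a_def b_def Re_sum)
  then have 1: "M *v a = Re \<mu> *\<^sub>R a - Im \<mu> *\<^sub>R b" by (simp add: vec_eq_iff)
  have "(M *v b) $ i = (Im \<mu> *\<^sub>R a + Re \<mu> *\<^sub>R b) $ i" for i
    using arg_cong[OF comp[of i], of Im] by (simp add: matrix_vector_mult_def a_def b_def Im_sum algebra_simps)
  then have 2: "M *v b = Im \<mu> *\<^sub>R a + Re \<mu> *\<^sub>R b" by (simp add: vec_eq_iff)
  have "a \<noteq> 0 \<or> b \<noteq> 0"
  proof (rule ccontr)
    assume "\<not> (a \<noteq> 0 \<or> b \<noteq> 0)"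
    then have "v $ i = 0" for i
      by (simp add: vec_eq_iff a_def b_def complex_eq_iff)
    then show False using v0 by (simp add: vec_eq_iff)
  qed
  then show ?thesis using 1 2 by blast
qed

lemma re_pos:
  fixes M K :: "real^'n::finite^'n"
  assumes Ksym: "\<And>x y. x \<bullet> (K *v y) = y \<bullet> (K *v x)"
    and Kpd: "\<And>x. x \<noteq> 0 \<Longrightarrow> x \<bullet> (K *v x) > 0"
    and KM: "\<And>x. x \<noteq> 0 \<Longrightarrow> x \<bullet> (K *v (M *v x)) > 0"
    and ev: "is_eigenvalue M \<mu>"
  shows "Re \<mu> > 0"
proof -
  obtain a b where ab: "a \<noteq> 0 \<or> b \<noteq> 0" and Ma: "M *v a = Re \<mu> *\<^sub>R a - Im \<mu> *\<^sub>R b"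
    and Mb: "M *v b = Im \<mu> *\<^sub>R a + Re \<mu> *\<^sub>R b"
    using eig_real[OF ev] by blast
  have nn: "x \<bullet> (K *v x) \<ge> 0" for x using Kpd[of x] by (cases "x = 0") auto
  have nn2: "x \<bullet> (K *v (M *v x)) \<ge> 0" for x using KM[of x] by (cases "x = 0") auto
  have pos1: "a \<bullet> (K *v a) + b \<bullet> (K *v b) > 0" using ab Kpd nn by (meson add_pos_nonneg add_nonneg_pos)
  have pos2: "a \<bullet> (K *v (M *v a)) + b \<bullet> (K *v (M *v b)) > 0" using ab KM nn2 by (meson add_pos_nonneg add_nonneg_pos)
  have "a \<bullet> (K *v (M *v a)) + b \<bullet> (K *v (M *v b)) = Re \<mu> * (a \<bullet> (K *v a) + b \<bullet> (K *v b))
      + Im \<mu> * (b \<bullet> (K *v a) - a \<bullet> (K *v b))"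
    unfolding Ma Mb by (simp add: matrix_vector_mult_diff_distrib matrix_vector_right_distrib
       matrix_vector_mult_scaleR inner_diff_right inner_add_right algebra_simps)
  also have "b \<bullet> (K *v a) - a \<bullet> (K *v b) = 0" using Ksym[of b a] by simp
  finally have "Re \<mu> * (a \<bullet> (K *v a) + b \<bullet> (K *v b)) > 0" using pos2 by simp
  then show ?thesis using pos1 by (simp add: zero_less_mult_iff)
qed

lemma xi_pos:
  fixes M :: "real^'n::finite^'n"
  assumes "\<And>\<mu>. is_eigenvalue M \<mu> \<Longrightarrow> Re \<mu> > 0"
  shows "Min {Re \<mu> | \<mu>. is_eigenvalue M \<mu>} > 0"
  using xi_set[of M] assms by (subst Min_gr_iff) auto

lemma xi_neg:
  fixes M :: "real^'n::finite^'n"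
  assumes "Min {Re \<mu> | \<mu>. is_eigenvalue M \<mu>} < 0"
  shows "\<exists>\<mu>. is_eigenvalue M \<mu> \<and> Re \<mu> < 0"
  using xi_set[of M] assms Min_less_iff by fastforce



lemma inv_props: fixes A :: "real^'n::finite^'n" assumes "invertible A"
  shows "A ** matrix_inv A = mat 1" "matrix_inv A ** A = mat 1"
  using someI_ex[OF assms[unfolded invertible_def]] unfolding matrix_inv_def by auto

lemma ker_invertible: fixes A :: "'a::field^'n::finite^'n"
  assumes "\<And>x. A *v x = 0 \<Longrightarrow> x = 0" shows "invertible A"
  using assms matrix_left_invertible_ker invertible_left_inverse by blast

lemma dot_transpose: "x \<bullet> (transpose A *v y) = (A *v x) \<bullet> (y::real^'m::finite)"
  for A :: "real^'n::finite^'m"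
  by (metis dot_lmul_matrix inner_commute transpose_matrix_vector)

lemma gram_quad: "x \<bullet> ((transpose A ** A) *v x) = (A *v x) \<bullet> (A *v x)"
  for A :: "real^'n::finite^'m::finite"
  by (metis dot_transpose matrix_vector_mul_assoc)

lemma lower_bound_inj: fixes A :: "real^'n::finite^'m::finite"
  assumes "\<And>x. A *v x = 0 \<Longrightarrow> x = 0"
  shows "\<exists>e>0. \<forall>x. norm (A *v x) \<ge> e * norm x"
  using injective_imp_isometric[of UNIV "(*v) A"] assms
  by (auto simp: matrix_vector_mul_bounded_linear)

lemma upper_bound_mat: fixes A :: "real^'n::finite^'m::finite"
  shows "\<exists>C\<ge>0. \<forall>x. norm (A *v x) \<le> C * norm x"
  using onorm[OF matrix_vector_mul_bounded_linear[of A]] onorm_pos_le[OF matrix_vector_mul_bounded_linear[of A]]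
  by blast

lemma exp_bind_set:
  fixes p :: "'a pmf" and f :: "'b \<Rightarrow> real"
  assumes "finite (set_pmf p)" "finite Bs" "Bs \<noteq> {}"
  shows "measure_pmf.expectation (bind_pmf p (\<lambda>x. map_pmf (g x) (pmf_of_set Bs))) f =
    measure_pmf.expectation p (\<lambda>x. (\<Sum>S\<in>Bs. f (g x S)) / card Bs)"
proof -
  have "measure_pmf.expectation (bind_pmf p (\<lambda>x. map_pmf (g x) (pmf_of_set Bs))) f =
     (\<Sum>a\<in>set_pmf p. pmf p a *\<^sub>R measure_pmf.expectation (map_pmf (g a) (pmf_of_set Bs)) f)"
    by (rule pmf_expectation_bind) (use assms in auto)
  also have "\<dots> = (\<Sum>a\<in>set_pmf p. pmf p a *\<^sub>R ((\<Sum>S\<in>Bs. f (g a S)) / card Bs))"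
    using assms by (simp add: integral_pmf_of_set)
  also have "\<dots> = measure_pmf.expectation p (\<lambda>x. (\<Sum>S\<in>Bs. f (g x S)) / card Bs)"
    by (rule integral_measure_pmf[symmetric]) (use assms in auto)
  finally show ?thesis .
qed

locale sngd =
  fixes J :: "real^'n::finite^'m::finite" and H :: "real^'m^'m"
    and q :: "real^'m" and c :: real and \<theta>s :: "real^'n" and k :: nat
  assumes full_rank: "rank J = CARD('n)"
    and H_sym: "transpose H = H"
    and H_pd: "\<And>x. x \<noteq> 0 \<Longrightarrow> x \<bullet> (H *v x) > 0"
    and opt: "\<And>v. quad_loss H q c (J *v \<theta>s) \<le> quad_loss H q c v"
    and range_incl: "range (\<lambda>x. (H ** J) *v x) \<subseteq> range (\<lambda>x. J *v x)"
    and k_pos: "1 \<le> k" and k_le: "k \<le> CARD('m)"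
begin

lemma J_inj: "J *v x = 0 \<Longrightarrow> x = 0"
  using full_rank full_rank_injective[of J] by (metis injD matrix_vector_mult_0_right)

definition "G = transpose J ** J"

lemma G_inv: "invertible G"
  unfolding G_def
proof (rule ker_invertible)
  fix x assume "(transpose J ** J) *v x = 0"
  then have "(J *v x) \<bullet> (J *v x) = 0" using gram_quad[of x J] by simp
  then show "x = 0" using J_inj by simp
qed

lemma Jplus_J: "Jplus J ** J = mat 1"
  using inv_props(2)[OF G_inv] unfolding Jplus_def G_def by (simp add: matrix_mul_assoc)

definition "B = Jplus J ** H ** J"

lemma JB: "J ** B = H ** J"
proof -
  have "(J ** B) *v x = (H ** J) *v x" for x
  proof -
    obtain y where y: "(H ** J) *v x = J *v y" using range_incl by blast
    have "B *v x = Jplus J *v ((H ** J) *v x)"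
      unfolding B_def by (simp add: matrix_vector_mul_assoc matrix_mul_assoc)
    also have "\<dots> = y" unfolding y by (simp add: matrix_vector_mul_assoc Jplus_J)
    finally show ?thesis by (metis y matrix_vector_mul_assoc)
  qed
  then show ?thesis using matrix_eq by blast
qed

lemma H_swap: "u \<bullet> (H *v v) = v \<bullet> (H *v u)"
  by (metis H_sym dot_transpose inner_commute)

lemma grad0: "H *v (J *v \<theta>s) + q = 0"
proof (rule ccontr)
  define v0 where "v0 = J *v \<theta>s"
  define g where "g = H *v v0 + q"
  assume "H *v (J *v \<theta>s) + q \<noteq> 0"
  then have g0: "g \<noteq> 0" unfolding g_def v0_def .
  define h where "h = g \<bullet> (H *v g)"
  have h0: "h > 0" using H_pd[OF g0] h_def by simp
  have gg: "g \<bullet> g > 0" using g0 by simp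
  define s where "s = (g \<bullet> g) / h"
  have s0: "s > 0" using h0 gg s_def by simp
  have exp: "quad_loss H q c (v0 - s *\<^sub>R g) = quad_loss H q c v0 - s * (g \<bullet> g) + s^2/2 * h"
  proof -
    have sw: "v0 \<bullet> (H *v g) = g \<bullet> (H *v v0)" by (rule H_swap)
    have gq: "g \<bullet> (H *v v0) + g \<bullet> q = g \<bullet> g" unfolding g_def by (simp add: inner_add_right)
    show ?thesis
      unfolding quad_loss_def h_def
      by (simp add: matrix_vector_mult_diff_distrib inner_diff_left inner_diff_right
        sw algebra_simps power2_eq_square gq[symmetric])
  qed
  have "s^2/2 * h = s * (g \<bullet> g) / 2" using h0 unfolding s_def by (simp add: power2_eq_square)
  then have "quad_loss H q c (v0 - s *\<^sub>R g) < quad_loss H q c v0"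
    using exp s0 gg by (simp add: mult_pos_pos)
  then show False using opt[of "v0 - s *\<^sub>R g"] v0_def by simp
qed

lemma step_err: "sngd_step lam eta J H q S \<theta> - \<theta>s =
   (\<theta> - \<theta>s) - eta *\<^sub>R (Pmat lam J S *v (B *v (\<theta> - \<theta>s)))"
proof -
  have "(H ** J) *v \<theta> + q = (H ** J) *v (\<theta> - \<theta>s)"
    using grad0 by (simp add: matrix_vector_mult_diff_distrib matrix_vector_mul_assoc[symmetric] algebra_simps)
  also have "\<dots> = J *v (B *v (\<theta> - \<theta>s))" by (metis JB matrix_vector_mul_assoc)
  finally have e: "(H ** J) *v \<theta> + q = J *v (B *v (\<theta> - \<theta>s))" .
  have X: "reg_pinv lam (rowsel S ** J) *v (rowsel S *v ((H ** J) *v \<theta> + q)) = Pmat lam J S *v (B *v (\<theta> - \<theta>s))"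
    unfolding e Pmat_def by (simp add: matrix_vector_mul_assoc matrix_mul_assoc)
  show ?thesis unfolding sngd_step_def X by (simp add: algebra_simps)
qed

lemma Mmat_eq: "Mmat lam J H k = Pbar lam J k ** B"
  unfolding Mmat_def B_def by (simp add: matrix_mul_assoc)

lemma fin_b: "finite (batches k :: 'm set set)" by simp

lemma ne_b: "batches k \<noteq> ({} :: 'm set set)"
proof -
  obtain T :: "'m set" where "card T = k" using obtain_subset_with_card_n[of k UNIV] k_le by auto
  then show ?thesis unfolding batches_def by auto
qed

lemma card_b_pos: "real (card (batches k :: 'm set set)) > 0"
  using fin_b ne_b by (simp add: card_gt_0_iff)

lemma fin_supp: "finite (set_pmf (sngd_pmf lam eta J H q k \<theta>0 t))"
  by (induction t) (auto simp: fin_b ne_b)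

lemma exp_step: "measure_pmf.expectation (sngd_pmf lam eta J H q k \<theta>0 (Suc t)) f =
   measure_pmf.expectation (sngd_pmf lam eta J H q k \<theta>0 t)
     (\<lambda>\<theta>. (\<Sum>S\<in>batches k. f (sngd_step lam eta J H q S \<theta>)) / card (batches k :: 'm set set))"
  by (simp add: exp_bind_set fin_supp fin_b ne_b)

end



lemma mat_mv: "(mat c :: real^'n::finite^'n) *v x = c *\<^sub>R x"
  by (simp add: vec_eq_iff matrix_vector_mult_def mat_def if_distrib[of "\<lambda>a. a * _"] sum.delta cong: if_cong)

lemma sum_mv: "(\<Sum>S\<in>X. A S) *v y = (\<Sum>S\<in>X. A S *v y)"
  for A :: "'s \<Rightarrow> real^'n::finite^'m::finite"
  by (induction X rule: infinite_finite_induct) (auto simp: matrix_vector_mult_add_rdistrib)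

lemma rowsel_mv: "(rowsel S *v z) $ i = (if i \<in> S then z $ i else 0)"
  by (simp add: rowsel_def matrix_vector_mult_def if_distrib[of "\<lambda>a. a * _"] sum.delta cong: if_cong)

lemma rowsel_norm: "norm (rowsel S *v z) \<le> norm z"
  by (rule norm_le_componentwise_cart) (simp add: rowsel_mv)

lemma rowsel_sym: "transpose (rowsel S) = rowsel S"
  by (simp add: rowsel_def transpose_def vec_eq_iff)

lemma rowsel_idem: "rowsel S ** rowsel S = rowsel S"
  by (simp add: matrix_eq rowsel_mv vec_eq_iff matrix_vector_mul_assoc[symmetric])

lemma count_batches:
  assumes "1 \<le> k" "k \<le> CARD('m::finite)"
  shows "card {S \<in> batches k. (i::'m) \<in> S} = (CARD('m) - 1) choose (k - 1)"
proof -
  have "bij_betw (\<lambda>S. S - {i}) {S \<in> batches k. i \<in> S} {T. T \<subseteq> UNIV - {i} \<and> card T = k - 1}"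
  proof (rule bij_betw_byWitness[where f' = "insert i"])
    show "\<forall>a\<in>{S \<in> batches k. i \<in> S}. insert i (a - {i}) = a" by auto
    show "\<forall>a'\<in>{T. T \<subseteq> UNIV - {i} \<and> card T = k - 1}. insert i a' - {i} = a'" by auto
    show "(\<lambda>S. S - {i}) ` {S \<in> batches k. i \<in> S} \<subseteq> {T. T \<subseteq> UNIV - {i} \<and> card T = k - 1}"
      by (auto simp: batches_def)
    show "insert i ` {T. T \<subseteq> UNIV - {i} \<and> card T = k - 1} \<subseteq> {S \<in> batches k. i \<in> S}"
      using assms by (auto simp: batches_def card_insert_if subset_Diff_insert)
  qed
  then have "card {S \<in> batches k. i \<in> S} = card {T. T \<subseteq> UNIV - {i} \<and> card T = k - 1}"
    by (rule bij_betw_same_card)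
  also have "\<dots> = card (UNIV - {i}) choose (k - 1)" by (rule n_subsets) simp
  also have "card (UNIV - {i}) = CARD('m) - 1" by (simp add: card_Diff_singleton)
  finally show ?thesis .
qed

lemma H_lower:
  fixes H :: "real^'m::finite^'m"
  assumes "\<And>x. x \<noteq> 0 \<Longrightarrow> x \<bullet> (H *v x) > 0"
  shows "\<exists>\<alpha>>0. \<forall>y. y \<bullet> (H *v y) \<ge> \<alpha> * (norm y)^2"
proof -
  have cont: "continuous_on (sphere 0 1) (\<lambda>y::real^'m. y \<bullet> (H *v y))"
    by (intro continuous_intros continuous_on_id linear_continuous_on matrix_vector_mul_bounded_linear)
  have ne: "sphere (0::real^'m) 1 \<noteq> {}" by simp
  obtain y0 where y0: "y0 \<in> sphere 0 1" and m: "\<forall>y\<in>sphere 0 1. y0 \<bullet> (H *v y0) \<le> y \<bullet> (H *v y)"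
    using continuous_attains_inf[OF compact_sphere ne cont] by blast
  define \<alpha> where "\<alpha> = y0 \<bullet> (H *v y0)"
  have "y0 \<noteq> 0" using y0 by auto
  then have a0: "\<alpha> > 0" using assms \<alpha>_def by simp
  have "y \<bullet> (H *v y) \<ge> \<alpha> * (norm y)^2" for y
  proof (cases "y = 0")
    case True then show ?thesis by simp
  next
    case False
    define z where "z = (1 / norm y) *\<^sub>R y"
    have "z \<in> sphere 0 1" using False by (simp add: z_def)
    then have "\<alpha> \<le> z \<bullet> (H *v z)" using m \<alpha>_def by blast
    also have "z \<bullet> (H *v z) = (y \<bullet> (H *v y)) / (norm y)^2"
      by (simp add: z_def matrix_vector_mult_scaleR power2_eq_square)
    finally show ?thesis using False by (simp add: field_simps)
  qed
  then show ?thesis using a0 by blast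
qed

lemma mv_sum: "A *v (\<Sum>S\<in>X. f S) = (\<Sum>S\<in>X. A *v f S)"
  for A :: "real^'n::finite^'m::finite"
  by (induction X rule: infinite_finite_induct) (auto simp: matrix_vector_right_distrib)

context sngd begin

definition "GS S = transpose (rowsel S ** J) ** (rowsel S ** J)"

lemma GS_mv: "GS S *v v = transpose J *v (rowsel S *v (J *v v))"
proof -
  have "GS S = transpose J ** (rowsel S ** rowsel S) ** J"
    by (simp add: GS_def matrix_transpose_mul rowsel_sym matrix_mul_assoc)
  then show ?thesis by (simp add: rowsel_idem matrix_vector_mul_assoc[symmetric])
qed

lemma GS_bound: "\<exists>Cg\<ge>0. \<forall>S v. norm (GS S *v v) \<le> Cg * norm v"
proof -
  obtain C1 where C1: "C1 \<ge> 0" "\<forall>x. norm (transpose J *v x) \<le> C1 * norm x" using upper_bound_mat by blast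
  obtain C2 where C2: "C2 \<ge> 0" "\<forall>x. norm (J *v x) \<le> C2 * norm x" using upper_bound_mat by blast
  have "norm (GS S *v v) \<le> (C1 * C2) * norm v" for S v
  proof -
    have "norm (GS S *v v) \<le> C1 * norm (rowsel S *v (J *v v))" unfolding GS_mv using C1 by blast
    also have "\<dots> \<le> C1 * norm (J *v v)" using mult_left_mono[OF rowsel_norm C1(1)] by blast
    also have "\<dots> \<le> C1 * (C2 * norm v)" using C1 C2 by (simp add: mult_left_mono)
    finally show ?thesis by simp
  qed
  then show ?thesis using C1 C2 by (metis mult_nonneg_nonneg)
qed

lemma GS_quad: "v \<bullet> (GS S *v v) \<ge> 0"
  unfolding GS_def gram_quad by simp

lemma C_inv: assumes "lam > 0" shows "invertible (GS S + mat lam)"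
proof (rule ker_invertible)
  fix x assume "(GS S + mat lam) *v x = 0"
  then have "x \<bullet> ((GS S + mat lam) *v x) = 0" by simp
  then have "x \<bullet> (GS S *v x) + lam * (x \<bullet> x) = 0"
    by (simp add: matrix_vector_mult_add_rdistrib mat_mv inner_add_right)
  then have "lam * (x \<bullet> x) \<le> 0" using GS_quad[of x S] by linarith
  then have "x \<bullet> x \<le> 0" using assms by (simp add: mult_le_0_iff)
  then show "x = 0" by (metis antisym inner_ge_zero inner_eq_zero_iff)
qed

lemma Pmat_eq: "lam > 0 \<Longrightarrow> Pmat lam J S = matrix_inv (GS S + mat lam) ** GS S"
  unfolding Pmat_def reg_pinv_def GS_def by (simp add: matrix_mul_assoc)

lemma Pmat_char: assumes "lam > 0"
  shows "GS S *v (Pmat lam J S *v u) + lam *\<^sub>R (Pmat lam J S *v u) = GS S *v u"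
proof -
  have "(GS S + mat lam) *v (Pmat lam J S *v u) = ((GS S + mat lam) ** matrix_inv (GS S + mat lam) ** GS S) *v u"
    unfolding Pmat_eq[OF assms] by (simp add: matrix_vector_mul_assoc matrix_mul_assoc)
  also have "\<dots> = GS S *v u" using inv_props(1)[OF C_inv[OF assms]] by simp
  finally show ?thesis by (simp add: matrix_vector_mult_add_rdistrib mat_mv)
qed

lemma P_bound: assumes "lam > 0"
  shows "lam * norm (Pmat lam J S *v u) \<le> norm (GS S *v u)"
proof -
  define y where "y = Pmat lam J S *v u"
  have ch: "GS S *v y + lam *\<^sub>R y = GS S *v u" using Pmat_char[OF assms] y_def by simp
  have "y \<bullet> (GS S *v u) = y \<bullet> (GS S *v y) + lam * (y \<bullet> y)"
    unfolding ch[symmetric] by (simp add: inner_add_right)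
  then have "lam * (norm y)^2 \<le> y \<bullet> (GS S *v u)" using GS_quad[of y S] by (simp add: power2_norm_eq_inner)
  also have "\<dots> \<le> norm y * norm (GS S *v u)" by (rule norm_cauchy_schwarz)
  finally have "norm y * (lam * norm y) \<le> norm y * norm (GS S *v u)" by (simp add: power2_eq_square algebra_simps)
  then show ?thesis unfolding y_def[symmetric]
    by (cases "y = 0") (use assms in auto)
qed

definition "NB = card (batches k :: 'm set set)"
definition "NC = (CARD('m) - 1) choose (k - 1)"

lemma NB_pos: "real NB > 0" unfolding NB_def using card_b_pos .

lemma NC_pos: "real NC > 0"
  unfolding NC_def using k_pos k_le by (simp add: zero_less_binomial_iff)

lemma sum_rowsel: "(\<Sum>S\<in>batches k. rowsel S *v z) = real NC *\<^sub>R (z::real^'m)"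
proof -
  have "(\<Sum>S\<in>batches k. (rowsel S *v z) $ i) = real NC * z $ i" for i :: 'm
  proof -
    have "(\<Sum>S\<in>batches k. (rowsel S *v z) $ i) = (\<Sum>S\<in>{S \<in> batches k. i \<in> S}. z $ i)"
      by (simp add: rowsel_mv sum.inter_filter[symmetric] fin_b)
    also have "\<dots> = real NC * z $ i"
      using count_batches[OF k_pos k_le, of i] by (simp add: NC_def)
    finally show ?thesis .
  qed
  then show ?thesis by (simp add: vec_eq_iff sum_component)
qed

lemma sum_GS: "(\<Sum>S\<in>batches k. GS S *v v) = real NC *\<^sub>R (G *v v)"
  unfolding GS_mv mv_sum[symmetric] sum_rowsel
  by (simp add: G_def matrix_vector_mult_scaleR matrix_vector_mul_assoc)

definition "K = transpose J ** H ** J"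

lemma K_GB: "K = G ** B"
  by (metis K_def G_def matrix_mul_assoc JB)

lemma K_mv: "K *v x = G *v (B *v x)"
  by (simp add: K_GB matrix_vector_mul_assoc)

lemma K_quad: "x \<bullet> (K *v y) = (J *v x) \<bullet> (H *v (J *v y))"
  by (simp add: K_def matrix_vector_mul_assoc[symmetric] dot_transpose[symmetric] del: transpose_matrix_vector)

lemma K_sym: "x \<bullet> (K *v y) = y \<bullet> (K *v x)"
  using K_quad H_swap by metis

lemma K_pd: "x \<noteq> 0 \<Longrightarrow> x \<bullet> (K *v x) > 0"
  using K_quad H_pd J_inj by metis

lemma K_lower: "\<exists>\<alpha>>0. \<forall>x. x \<bullet> (K *v x) \<ge> \<alpha> * (norm x)^2"
proof -
  obtain aH where aH: "aH > 0" "\<forall>y. y \<bullet> (H *v y) \<ge> aH * (norm y)^2" using H_lower[OF H_pd] by blast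
  obtain gJ where gJ: "gJ > 0" "\<forall>x. norm (J *v x) \<ge> gJ * norm x" using lower_bound_inj[OF J_inj] by blast
  have "x \<bullet> (K *v x) \<ge> (aH * gJ^2) * (norm x)^2" for x
  proof -
    have "(gJ * norm x)^2 \<le> (norm (J *v x))^2"
      using gJ by (intro power_mono) auto
    then have "aH * (gJ^2 * (norm x)^2) \<le> aH * (norm (J *v x))^2"
      using aH by (simp add: power_mult_distrib)
    also have "\<dots> \<le> x \<bullet> (K *v x)" using aH K_quad by metis
    finally show ?thesis by (simp add: algebra_simps)
  qed
  then show ?thesis using aH gJ by (metis mult_pos_pos zero_less_power)
qed

lemma K_upper: "\<exists>CK>0. \<forall>x. x \<bullet> (K *v x) \<le> CK * (norm x)^2"
proof -
  obtain C where C: "C \<ge> 0" "\<forall>x. norm (K *v x) \<le> C * norm x" using upper_bound_mat by blast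
  have "x \<bullet> (K *v x) \<le> (C + 1) * (norm x)^2" for x
  proof -
    have "x \<bullet> (K *v x) \<le> norm x * norm (K *v x)" by (rule norm_cauchy_schwarz)
    also have "\<dots> \<le> norm x * (C * norm x)" using C by (simp add: mult_left_mono)
    also have "\<dots> \<le> (C + 1) * (norm x)^2" by (simp add: power2_eq_square algebra_simps)
    finally show ?thesis .
  qed
  then show ?thesis using C by (metis add_nonneg_pos zero_less_one)
qed

lemma B_lower: "\<exists>\<gamma>>0. \<forall>x. norm (B *v x) \<ge> \<gamma> * norm x"
proof (rule lower_bound_inj)
  fix x assume "B *v x = 0"
  then have "H *v (J *v x) = 0" by (metis JB matrix_vector_mul_assoc matrix_vector_mult_0_right)
  then have "(J *v x) \<bullet> (H *v (J *v x)) = 0" by simp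
  then have "J *v x = 0" using H_pd by fastforce
  then show "x = 0" by (rule J_inj)
qed

lemma G_lower: "\<exists>\<gamma>>0. \<forall>x. norm (G *v x) \<ge> \<gamma> * norm x"
proof (rule lower_bound_inj)
  fix x assume "G *v x = 0"
  then have "matrix_inv G *v (G *v x) = 0" by simp
  then show "x = 0" using inv_props(2)[OF G_inv] by (simp add: matrix_vector_mul_assoc)
qed

lemma Pbar_mv: "Pbar lam J k *v u = (1 / real NB) *\<^sub>R (\<Sum>S\<in>batches k. Pmat lam J S *v u)"
  unfolding Pbar_def NB_def by (simp add: scaleR_matrix_vector_assoc[symmetric] sum_mv)

lemma key:
  "\<exists>lam0\<ge>0. \<exists>\<beta>0>0. \<forall>lam>lam0. \<forall>x. x \<bullet> (K *v (Mmat lam J H k *v x)) \<ge> \<beta>0 / lam * (norm x)^2"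
proof -
  obtain Cg where Cg: "Cg \<ge> 0" "\<forall>S v. norm (GS S *v v) \<le> Cg * norm v" using GS_bound by blast
  obtain CG where CG: "CG \<ge> 0" "\<forall>x. norm (G *v x) \<le> CG * norm x" using upper_bound_mat by blast
  obtain gG where gG: "gG > 0" "\<forall>x. norm (G *v x) \<ge> gG * norm x" using G_lower by blast
  obtain gB where gB: "gB > 0" "\<forall>x. norm (B *v x) \<ge> gB * norm x" using B_lower by blast
  define D where "D = CG * Cg * Cg"
  have D0: "D \<ge> 0" using CG Cg by (simp add: D_def)
  define lam0 where "lam0 = 2 * real NB * D / (real NC * gG^2)"
  define \<beta>0 where "\<beta>0 = real NC * gG^2 * gB^2 / (2 * real NB)"
  have lam00: "lam0 \<ge> 0" using NB_pos NC_pos D0 gG by (simp add: lam0_def)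
  have b0: "\<beta>0 > 0" using NB_pos NC_pos gG gB by (simp add: \<beta>0_def)
  have main: "x \<bullet> (K *v (Mmat lam J H k *v x)) \<ge> \<beta>0 / lam * (norm x)^2" if lam: "lam > lam0" for lam x
  proof -
    have lp: "lam > 0" using lam lam00 by simp
    define u where "u = B *v x"
    have per: "lam * ((G *v u) \<bullet> (Pmat lam J S *v u)) \<ge> (G *v u) \<bullet> (GS S *v u) - D * (norm u)^2 / lam" for S
    proof -
      define y where "y = Pmat lam J S *v u"
      have ch: "lam *\<^sub>R y = GS S *v u - GS S *v y" using Pmat_char[OF lp, of S u] y_def by (simp add: algebra_simps)
      have eq: "lam * ((G *v u) \<bullet> y) = (G *v u) \<bullet> (GS S *v u) - (G *v u) \<bullet> (GS S *v y)"
        using arg_cong[OF ch, of "\<lambda>z. (G *v u) \<bullet> z"] by (simp add: inner_diff_right)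
      have ny: "lam * norm y \<le> Cg * norm u" using P_bound[OF lp, of S u] Cg y_def by (metis order_trans)
      have "(G *v u) \<bullet> (GS S *v y) \<le> norm (G *v u) * norm (GS S *v y)" by (rule norm_cauchy_schwarz)
      also have "\<dots> \<le> (CG * norm u) * (Cg * norm y)"
        using CG Cg by (intro mult_mono) auto
      also have "\<dots> = (CG * norm u * Cg) * (lam * norm y) / lam" using lp by simp
      also have "\<dots> \<le> (CG * norm u * Cg) * (Cg * norm u) / lam"
        using ny CG Cg lp by (intro divide_right_mono mult_left_mono) auto
      also have "\<dots> = D * (norm u)^2 / lam" by (simp add: D_def power2_eq_square)
      finally show ?thesis using eq y_def by simp
    qed
    have "lam * (\<Sum>S\<in>batches k. (G *v u) \<bullet> (Pmat lam J S *v u)) =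
        (\<Sum>S\<in>batches k. lam * ((G *v u) \<bullet> (Pmat lam J S *v u)))" by (simp add: sum_distrib_left)
    also have "\<dots> \<ge> (\<Sum>S\<in>batches k. (G *v u) \<bullet> (GS S *v u) - D * (norm u)^2 / lam)"
      by (rule sum_mono) (rule per)
    finally have s1: "lam * (\<Sum>S\<in>batches k. (G *v u) \<bullet> (Pmat lam J S *v u)) \<ge>
        (G *v u) \<bullet> (\<Sum>S\<in>batches k. GS S *v u) - real NB * (D * (norm u)^2 / lam)"
      by (simp add: sum_subtractf inner_sum_right NB_def)
    have s2: "(G *v u) \<bullet> (\<Sum>S\<in>batches k. GS S *v u) = real NC * (norm (G *v u))^2"
      by (simp add: sum_GS power2_norm_eq_inner)
    have s3: "(norm (G *v u))^2 \<ge> gG^2 * (norm u)^2"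
    proof -
      have "(gG * norm u)^2 \<le> (norm (G *v u))^2" using gG by (intro power_mono) auto
      then show ?thesis by (simp add: power_mult_distrib)
    qed
    have s4: "real NB * D / lam \<le> real NC * gG^2 / 2"
    proof -
      have "2 * real NB * D \<le> lam * (real NC * gG^2)"
        using lam NC_pos gG unfolding lam0_def by (simp add: pos_divide_less_eq less_imp_le mult.commute)
      then show ?thesis using lp by (simp add: divide_le_eq field_simps)
    qed
    have "lam * (\<Sum>S\<in>batches k. (G *v u) \<bullet> (Pmat lam J S *v u)) \<ge>
        real NC * (gG^2 * (norm u)^2) - (real NB * D / lam) * (norm u)^2"
      using s1 s2 s3 NC_pos by (smt (verit, ccfv_SIG) mult_left_mono times_divide_eq_right mult.commute mult.left_commute)
    moreover have "(real NB * D / lam) * (norm u)^2 \<le> (real NC * gG^2 / 2) * (norm u)^2"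
      using mult_right_mono[OF s4, of "(norm u)^2"] by simp
    moreover have "real NC * (gG^2 * (norm u)^2) = 2 * (real NC * gG^2 / 2 * (norm u)^2)" by simp
    ultimately have s5: "lam * (\<Sum>S\<in>batches k. (G *v u) \<bullet> (Pmat lam J S *v u)) \<ge> real NC * gG^2 / 2 * (norm u)^2"
      by linarith
    have nu: "(norm u)^2 \<ge> gB^2 * (norm x)^2"
    proof -
      have "(gB * norm x)^2 \<le> (norm u)^2" using gB u_def by (intro power_mono) auto
      then show ?thesis by (simp add: power_mult_distrib)
    qed
    have xK: "x \<bullet> (K *v (Mmat lam J H k *v x)) = (1 / real NB) * (\<Sum>S\<in>batches k. (G *v u) \<bullet> (Pmat lam J S *v u))"
    proof -
      have "x \<bullet> (K *v (Mmat lam J H k *v x)) = (Mmat lam J H k *v x) \<bullet> (G *v u)"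
        using K_sym K_mv u_def by metis
      also have "\<dots> = (Pbar lam J k *v u) \<bullet> (G *v u)"
        by (simp add: Mmat_eq u_def matrix_vector_mul_assoc)
      also have "\<dots> = (1 / real NB) * (\<Sum>S\<in>batches k. (G *v u) \<bullet> (Pmat lam J S *v u))"
        by (simp add: Pbar_mv inner_sum_right inner_commute)
      finally show ?thesis .
    qed
    have "\<beta>0 / lam * (norm x)^2 = (1 / real NB) * (real NC * gG^2 / 2 * (gB^2 * (norm x)^2)) / lam"
      by (simp add: \<beta>0_def)
    also have "\<dots> \<le> (1 / real NB) * (real NC * gG^2 / 2 * (norm u)^2) / lam"
      using nu NB_pos NC_pos lp by (intro divide_right_mono mult_left_mono) auto
    also have "\<dots> \<le> (1 / real NB) * (lam * (\<Sum>S\<in>batches k. (G *v u) \<bullet> (Pmat lam J S *v u))) / lam"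
      using s5 NB_pos lp by (intro divide_right_mono mult_left_mono) auto
    also have "\<dots> = x \<bullet> (K *v (Mmat lam J H k *v x))" using lp xK by simp
    finally show ?thesis .
  qed
  show ?thesis using lam00 b0 main by blast
qed

end



context sngd begin

lemma exp_step_err: "measure_pmf.expectation (sngd_pmf lam eta J H q k \<theta>0 (Suc t)) (\<lambda>\<theta>. f (\<theta> - \<theta>s)) =
   measure_pmf.expectation (sngd_pmf lam eta J H q k \<theta>0 t)
     (\<lambda>\<theta>. (\<Sum>S\<in>batches k. f ((\<theta> - \<theta>s) - eta *\<^sub>R (Pmat lam J S *v (B *v (\<theta> - \<theta>s))))) / real NB)"
  unfolding exp_step step_err NB_def ..

lemma integ: "integrable (measure_pmf (sngd_pmf lam eta J H q k \<theta>0 t)) (f :: _ \<Rightarrow> real)"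
  by (rule integrable_measure_pmf_finite[OF fin_supp])

lemma part2:
  "\<exists>lam0\<ge>0. \<forall>lam>lam0. xi J H k lam > 0 \<and>
     (\<exists>eta0>0. \<forall>eta. 0 < eta \<and> eta < eta0 \<longrightarrow>
        (\<forall>\<theta>0. (\<lambda>t. msq_err lam eta J H q k \<theta>0 \<theta>s t) \<longlonglongrightarrow> 0))"
proof -
  obtain lam0 \<beta>0 where lam00: "lam0 \<ge> 0" and b0: "\<beta>0 > 0"
    and KM: "\<And>lam x. lam > lam0 \<Longrightarrow> x \<bullet> (K *v (Mmat lam J H k *v x)) \<ge> \<beta>0 / lam * (norm x)^2"
    using key by blast
  have "xi J H k lam > 0 \<and>
     (\<exists>eta0>0. \<forall>eta. 0 < eta \<and> eta < eta0 \<longrightarrow>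
        (\<forall>\<theta>0. (\<lambda>t. msq_err lam eta J H q k \<theta>0 \<theta>s t) \<longlonglongrightarrow> 0))" if lam: "lam > lam0" for lam
  proof
    have lp: "lam > 0" using lam lam00 by simp
    define \<beta> where "\<beta> = \<beta>0 / lam"
    have bp: "\<beta> > 0" using b0 lp by (simp add: \<beta>_def)
    have KMb: "x \<bullet> (K *v (Mmat lam J H k *v x)) \<ge> \<beta> * (norm x)^2" for x
      using KM[OF lam] \<beta>_def by simp
    show "xi J H k lam > 0"
      unfolding xi_def
    proof (rule xi_pos, rule re_pos[of K])
      show "x \<bullet> (K *v y) = y \<bullet> (K *v x)" for x y by (rule K_sym)
      show "x \<noteq> 0 \<Longrightarrow> x \<bullet> (K *v x) > 0" for x by (rule K_pd)
      show "x \<noteq> 0 \<Longrightarrow> x \<bullet> (K *v (Mmat lam J H k *v x)) > 0" for x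
        using KMb[of x] bp by (smt (verit) mult_pos_pos zero_less_norm_iff zero_less_power)
    qed
    show "\<exists>eta0>0. \<forall>eta. 0 < eta \<and> eta < eta0 \<longrightarrow>
        (\<forall>\<theta>0. (\<lambda>t. msq_err lam eta J H q k \<theta>0 \<theta>s t) \<longlonglongrightarrow> 0)"
    proof -
      obtain Cg where Cg: "Cg \<ge> 0" "\<forall>S v. norm (GS S *v v) \<le> Cg * norm v" using GS_bound by blast
      obtain CB where CB: "CB \<ge> 0" "\<forall>x. norm (B *v x) \<le> CB * norm x" using upper_bound_mat by blast
      obtain CK where CK: "CK > 0" "\<forall>x. x \<bullet> (K *v x) \<le> CK * (norm x)^2" using K_upper by blast
      obtain \<alpha> where al: "\<alpha> > 0" "\<forall>x. x \<bullet> (K *v x) \<ge> \<alpha> * (norm x)^2" using K_lower by blast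
      define D2 where "D2 = CK * (Cg * CB / lam)^2"
      have D20: "D2 \<ge> 0" using CK by (simp add: D2_def)
      define eta0 where "eta0 = min (\<beta> / (D2 + 1)) (CK / \<beta>)"
      have e0: "eta0 > 0" using bp CK D20 by (simp add: eta0_def)
      have conv: "(\<lambda>t. msq_err lam eta J H q k \<theta>0 \<theta>s t) \<longlonglongrightarrow> 0" if eta: "0 < eta" "eta < eta0" for eta \<theta>0
      proof -
        define V where "V = (\<lambda>e. e \<bullet> (K *v e))"
        define \<rho> where "\<rho> = 1 - eta * \<beta> / CK"
        have eD: "eta * D2 \<le> \<beta>"
        proof -
          have "eta < \<beta> / (D2 + 1)" using eta by (simp add: eta0_def)
          then have "eta * (D2 + 1) < \<beta>" using D20 by (simp add: pos_less_divide_eq)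
          then show ?thesis using eta by (simp add: algebra_simps)
        qed
        have rho1: "\<bar>\<rho>\<bar> < 1"
        proof -
          have "eta < CK / \<beta>" using eta by (simp add: eta0_def)
          then have "eta * \<beta> < CK" using bp by (simp add: pos_less_divide_eq)
          then have "eta * \<beta> / CK < 1" using CK by simp
          moreover have "eta * \<beta> / CK > 0" using eta bp CK by simp
          ultimately show ?thesis unfolding \<rho>_def by linarith
        qed
        have onestep: "(\<Sum>S\<in>batches k. V (e - eta *\<^sub>R (Pmat lam J S *v (B *v e)))) / real NB \<le> \<rho> * V e" for e
        proof -
          define z where "z = (\<lambda>S. Pmat lam J S *v (B *v e))"
          have exp: "V (e - eta *\<^sub>R z S) = V e - 2 * eta * (e \<bullet> (K *v z S)) + eta^2 * V (z S)" for S
            unfolding V_def using K_sym[of "z S" e]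
            by (simp add: matrix_vector_mult_diff_distrib matrix_vector_mult_scaleR inner_diff_left inner_diff_right
                algebra_simps power2_eq_square)
          have zb: "V (z S) \<le> D2 * (norm e)^2" for S
          proof -
            have "lam * norm (z S) \<le> Cg * norm (B *v e)"
              using P_bound[OF lp, of S "B *v e"] Cg z_def by (metis order_trans)
            also have "\<dots> \<le> Cg * (CB * norm e)" using CB Cg by (simp add: mult_left_mono)
            finally have "norm (z S) \<le> Cg * CB / lam * norm e" using lp by (simp add: field_simps)
            then have "(norm (z S))^2 \<le> (Cg * CB / lam * norm e)^2" by (intro power_mono) auto
            then have "CK * (norm (z S))^2 \<le> CK * (Cg * CB / lam * norm e)^2" using CK by simp
            then show ?thesis using CK(2) unfolding V_def D2_def by (smt (verit) power_mult_distrib mult.assoc)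
          qed
          have lin: "(\<Sum>S\<in>batches k. e \<bullet> (K *v z S)) / real NB = e \<bullet> (K *v (Mmat lam J H k *v e))"
          proof -
            have "Mmat lam J H k *v e = (1 / real NB) *\<^sub>R (\<Sum>S\<in>batches k. z S)"
              by (simp add: Mmat_eq matrix_vector_mul_assoc[symmetric] Pbar_mv z_def)
            then show ?thesis
              by (simp add: matrix_vector_mult_scaleR mv_sum inner_sum_right)
          qed
          have "(\<Sum>S\<in>batches k. V (e - eta *\<^sub>R z S)) / real NB =
             V e - 2 * eta * ((\<Sum>S\<in>batches k. e \<bullet> (K *v z S)) / real NB) + eta^2 * ((\<Sum>S\<in>batches k. V (z S)) / real NB)"
            using NB_pos unfolding exp
            by (simp add: sum.distrib sum_subtractf sum_distrib_left[symmetric] NB_def[symmetric] field_simps) (simp add: sum_distrib_left mult.commute)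
          also have "\<dots> \<le> V e - 2 * eta * (\<beta> * (norm e)^2) + eta^2 * (D2 * (norm e)^2)"
          proof -
            have "(\<Sum>S\<in>batches k. V (z S)) \<le> (\<Sum>S\<in>(batches k :: 'm set set). D2 * (norm e)^2)" by (intro sum_mono zb)
            then have "(\<Sum>S\<in>batches k. V (z S)) / real NB \<le> D2 * (norm e)^2" using NB_pos by (simp add: NB_def pos_divide_le_eq mult.commute)
            moreover have "(\<Sum>S\<in>batches k. e \<bullet> (K *v z S)) / real NB \<ge> \<beta> * (norm e)^2" using lin KMb by simp
            ultimately show ?thesis using eta
              by (smt (verit) mult_left_mono mult_pos_pos zero_less_power)
          qed
          also have "\<dots> \<le> V e - eta * \<beta> * (norm e)^2"
          proof -
            have "eta^2 * (D2 * (norm e)^2) = eta * (eta * D2) * (norm e)^2" by (simp add: power2_eq_square)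
            also have "\<dots> \<le> eta * \<beta> * (norm e)^2" using eD eta by (intro mult_right_mono mult_left_mono) auto
            finally show ?thesis by (simp add: mult.commute mult.left_commute)
          qed
          also have "\<dots> \<le> \<rho> * V e"
          proof -
            have "V e \<le> CK * (norm e)^2" using CK V_def by simp
            then have "eta * \<beta> / CK * V e \<le> eta * \<beta> * (norm e)^2"
              using CK eta bp by (simp add: field_simps mult_left_mono)
            then show ?thesis unfolding \<rho>_def by (simp add: algebra_simps)
          qed
          finally show ?thesis unfolding z_def .
        qed
        let ?E = "\<lambda>t f. measure_pmf.expectation (sngd_pmf lam eta J H q k \<theta>0 t) f"
        have Vnn: "V e \<ge> 0" for e using K_pd[of e] V_def by (cases "e = 0") auto
        have Eind: "?E t (\<lambda>\<theta>. V (\<theta> - \<theta>s)) \<le> \<bar>\<rho>\<bar>^t * V (\<theta>0 - \<theta>s)" for t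
        proof (induction t)
          case 0 then show ?case by simp
        next
          case (Suc t)
          have "?E (Suc t) (\<lambda>\<theta>. V (\<theta> - \<theta>s)) \<le> ?E t (\<lambda>\<theta>. \<rho> * V (\<theta> - \<theta>s))"
            unfolding exp_step_err by (rule integral_mono) (auto intro: integ onestep)
          also have "\<dots> = \<rho> * ?E t (\<lambda>\<theta>. V (\<theta> - \<theta>s))" by simp
          also have "\<dots> \<le> \<bar>\<rho>\<bar> * ?E t (\<lambda>\<theta>. V (\<theta> - \<theta>s))"
            using Vnn by (intro mult_right_mono) (auto intro: integral_nonneg_AE)
          also have "\<dots> \<le> \<bar>\<rho>\<bar> * (\<bar>\<rho>\<bar>^t * V (\<theta>0 - \<theta>s))" using Suc by (simp add: mult_left_mono)
          finally show ?case by simp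
        qed
        have bnd: "msq_err lam eta J H q k \<theta>0 \<theta>s t \<le> \<bar>\<rho>\<bar>^t * (V (\<theta>0 - \<theta>s) / \<alpha>)" for t
        proof -
          have "msq_err lam eta J H q k \<theta>0 \<theta>s t \<le> ?E t (\<lambda>\<theta>. V (\<theta> - \<theta>s) / \<alpha>)"
            unfolding msq_err_def
            by (rule integral_mono) (use al V_def in \<open>auto intro: integ simp: pos_le_divide_eq mult.commute\<close>)
          also have "\<dots> = ?E t (\<lambda>\<theta>. V (\<theta> - \<theta>s)) / \<alpha>" by simp
          also have "\<dots> \<le> \<bar>\<rho>\<bar>^t * V (\<theta>0 - \<theta>s) / \<alpha>" using Eind[of t] al by (simp add: divide_right_mono)
          finally show ?thesis by simp
        qed
        have nn: "msq_err lam eta J H q k \<theta>0 \<theta>s t \<ge> 0" for t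
          unfolding msq_err_def by (auto intro: integral_nonneg_AE)
        have lim: "(\<lambda>t. \<bar>\<rho>\<bar>^t * (V (\<theta>0 - \<theta>s) / \<alpha>)) \<longlonglongrightarrow> 0"
          using rho1 by (intro tendsto_mult_left_zero LIMSEQ_power_zero) simp
        show ?thesis
          by (rule tendsto_sandwich[OF _ _ tendsto_const lim]) (use nn bnd in auto)
      qed
      show ?thesis using e0 conv by blast
    qed
  qed
  then show ?thesis using lam00 by blast
qed

end


context sngd begin

definition "xseq lam eta e0 t = ((\<lambda>y. y - eta *\<^sub>R (Mmat lam J H k *v y)) ^^ t) e0"

lemma xseq_0: "xseq lam eta e0 0 = e0" by (simp add: xseq_def)
lemma xseq_Suc: "xseq lam eta e0 (Suc t) = xseq lam eta e0 t - eta *\<^sub>R (Mmat lam J H k *v xseq lam eta e0 t)"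
  by (simp add: xseq_def)

lemma mean_evol:
  "measure_pmf.expectation (sngd_pmf lam eta J H q k \<theta>0 t) (\<lambda>\<theta>. (\<theta> - \<theta>s) \<bullet> w) = xseq lam eta (\<theta>0 - \<theta>s) t \<bullet> w"
proof (induction t arbitrary: w)
  case 0 then show ?case by (simp add: xseq_0)
next
  case (Suc t)
  let ?M = "Mmat lam J H k"
  have avg: "(\<Sum>S\<in>batches k. ((e - eta *\<^sub>R (Pmat lam J S *v (B *v e))) \<bullet> w)) / real NB
      = e \<bullet> (w - eta *\<^sub>R (transpose ?M *v w))" for e
  proof -
    have Me: "?M *v e = (1 / real NB) *\<^sub>R (\<Sum>S\<in>batches k. Pmat lam J S *v (B *v e))"
      by (simp add: Mmat_eq matrix_vector_mul_assoc[symmetric] Pbar_mv)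
    have "(\<Sum>S\<in>batches k. ((e - eta *\<^sub>R (Pmat lam J S *v (B *v e))) \<bullet> w)) / real NB
        = (real NB * (e \<bullet> w) - eta * ((\<Sum>S\<in>batches k. Pmat lam J S *v (B *v e)) \<bullet> w)) / real NB"
      by (simp add: inner_diff_left sum_subtractf inner_sum_left sum_distrib_left NB_def)
    also have "\<dots> = e \<bullet> w - eta * ((?M *v e) \<bullet> w)"
      using NB_pos unfolding Me by (simp add: field_simps)
    also have "\<dots> = e \<bullet> (w - eta *\<^sub>R (transpose ?M *v w))"
      by (simp add: inner_diff_right dot_transpose[of e ?M w] del: transpose_matrix_vector)
    finally show ?thesis .
  qed
  have "measure_pmf.expectation (sngd_pmf lam eta J H q k \<theta>0 (Suc t)) (\<lambda>\<theta>. (\<theta> - \<theta>s) \<bullet> w)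
      = measure_pmf.expectation (sngd_pmf lam eta J H q k \<theta>0 t) (\<lambda>\<theta>. (\<theta> - \<theta>s) \<bullet> (w - eta *\<^sub>R (transpose ?M *v w)))"
    using exp_step_err[of lam eta \<theta>0 t "\<lambda>e. e \<bullet> w"] avg by simp
  also have "\<dots> = xseq lam eta (\<theta>0 - \<theta>s) t \<bullet> (w - eta *\<^sub>R (transpose ?M *v w))" by (rule Suc.IH)
  also have "\<dots> = xseq lam eta (\<theta>0 - \<theta>s) (Suc t) \<bullet> w"
    unfolding xseq_Suc
    by (simp add: inner_diff_right inner_diff_left dot_transpose del: transpose_matrix_vector)
  finally show ?case .
qed

lemma msq_lower: "msq_err lam eta J H q k \<theta>0 \<theta>s t \<ge> (norm (xseq lam eta (\<theta>0 - \<theta>s) t))^2"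
proof -
  define x where "x = xseq lam eta (\<theta>0 - \<theta>s) t"
  let ?E = "measure_pmf.expectation (sngd_pmf lam eta J H q k \<theta>0 t)"
  have pt: "(norm (\<theta> - \<theta>s))^2 \<ge> 2 * ((\<theta> - \<theta>s) \<bullet> x) - (norm x)^2" for \<theta>
  proof -
    have "0 \<le> (norm ((\<theta> - \<theta>s) - x))^2" by simp
    also have "\<dots> = (norm (\<theta> - \<theta>s))^2 - 2 * ((\<theta> - \<theta>s) \<bullet> x) + (norm x)^2"
      by (simp add: power2_norm_eq_inner inner_diff_left inner_diff_right inner_commute)
    finally show ?thesis by simp
  qed
  have "?E (\<lambda>\<theta>. 2 * ((\<theta> - \<theta>s) \<bullet> x) - (norm x)^2) \<le> ?E (\<lambda>\<theta>. (norm (\<theta> - \<theta>s))^2)"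
    by (rule integral_mono) (auto intro: integ pt)
  moreover have "?E (\<lambda>\<theta>. 2 * ((\<theta> - \<theta>s) \<bullet> x) - (norm x)^2) = 2 * ?E (\<lambda>\<theta>. (\<theta> - \<theta>s) \<bullet> x) - (norm x)^2"
    by (simp add: integral_diff integ)
  moreover have "?E (\<lambda>\<theta>. (\<theta> - \<theta>s) \<bullet> x) = (norm x)^2"
    using mean_evol[of lam eta \<theta>0 t x] by (simp add: x_def power2_norm_eq_inner)
  ultimately show ?thesis unfolding msq_err_def x_def by simp
qed

lemma no_conv_lower:
  assumes "\<And>t. msq_err lam eta J H q k \<theta>0 \<theta>s t \<ge> cc" "cc > 0"
  shows "\<not> ((\<lambda>t. msq_err lam eta J H q k \<theta>0 \<theta>s t) \<longlonglongrightarrow> 0)"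
proof
  assume "(\<lambda>t. msq_err lam eta J H q k \<theta>0 \<theta>s t) \<longlonglongrightarrow> 0"
  then have "cc \<le> 0" using assms(1) by (intro LIMSEQ_le_const) auto
  then show False using assms(2) by simp
qed

lemma part1:
  assumes "xi J H k lam < 0"
  shows "\<exists>\<theta>0. \<forall>eta>0. \<not> ((\<lambda>t. msq_err lam eta J H q k \<theta>0 \<theta>s t) \<longlonglongrightarrow> 0)"
proof -
  let ?M = "Mmat lam J H k"
  obtain \<mu> where ev: "is_eigenvalue ?M \<mu>" and neg: "Re \<mu> < 0"
    using xi_neg assms unfolding xi_def by blast
  obtain a b where ab: "a \<noteq> 0 \<or> b \<noteq> 0" and Ma: "?M *v a = Re \<mu> *\<^sub>R a - Im \<mu> *\<^sub>R b"
    and Mb: "?M *v b = Im \<mu> *\<^sub>R a + Re \<mu> *\<^sub>R b"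
    using eig_real[OF ev] by blast
  define \<alpha> where "\<alpha> = Re \<mu>"
  define \<beta> where "\<beta> = Im \<mu>"
  show ?thesis
  proof (cases "\<beta> = 0")
    case True
    define e0 where "e0 = (if a \<noteq> 0 then a else b)"
    have e00: "e0 \<noteq> 0" using ab e0_def by auto
    have Me0: "?M *v e0 = \<alpha> *\<^sub>R e0" using Ma Mb True e0_def \<alpha>_def \<beta>_def by auto
    have "\<forall>eta>0. \<not> ((\<lambda>t. msq_err lam eta J H q k (\<theta>s + e0) \<theta>s t) \<longlonglongrightarrow> 0)"
    proof (intro allI impI)
      fix eta :: real assume eta: "eta > 0"
      have xs: "xseq lam eta e0 t = (1 - eta * \<alpha>)^t *\<^sub>R e0" for t
        by (induction t) (simp_all add: xseq_0 xseq_Suc matrix_vector_mult_scaleR Me0 algebra_simps)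
      have g1: "1 \<le> 1 - eta * \<alpha>" using eta neg \<alpha>_def using mult_pos_neg[of eta "Re \<mu>"] by simp
      have "msq_err lam eta J H q k (\<theta>s + e0) \<theta>s t \<ge> (norm e0)^2" for t
      proof -
        have "(norm e0)^2 \<le> ((1 - eta * \<alpha>)^t * norm e0)^2"
        proof -
          have "1 * norm e0 \<le> (1 - eta * \<alpha>)^t * norm e0"
            using g1 one_le_power[OF g1, of t] by (intro mult_right_mono) auto
          then show ?thesis by (intro power_mono) auto
        qed
        also have "\<dots> = (norm (xseq lam eta e0 t))^2" using g1 by (simp add: xs)
        also have "\<dots> \<le> msq_err lam eta J H q k (\<theta>s + e0) \<theta>s t" using msq_lower[of lam eta "\<theta>s + e0" t] by simp
        finally show ?thesis .
      qed
      then show "\<not> ((\<lambda>t. msq_err lam eta J H q k (\<theta>s + e0) \<theta>s t) \<longlonglongrightarrow> 0)"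
        using e00 by (intro no_conv_lower[where cc = "(norm e0)^2"]) auto
    qed
    then show ?thesis by blast
  next
    case False
    have a0: "a \<noteq> 0"
    proof
      assume "a = 0"
      then have "\<beta> *\<^sub>R b = 0" using Ma \<beta>_def by simp
      then have "b = 0" using False by simp
      then show False using ab \<open>a = 0\<close> by simp
    qed
    define p where "p = a \<bullet> a"
    define r where "r = a \<bullet> b"
    define s where "s = b \<bullet> b"
    have p0: "p > 0" using a0 p_def by simp
    have nd: "r *\<^sub>R a - p *\<^sub>R b \<noteq> 0"
    proof
      assume "r *\<^sub>R a - p *\<^sub>R b = 0"
      then have "(1 / p) *\<^sub>R (r *\<^sub>R a) = (1 / p) *\<^sub>R (p *\<^sub>R b)" by simp
      then have bt: "b = (r / p) *\<^sub>R a" using p0 by simp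
      define t where "t = r / p"
      have bt': "b = t *\<^sub>R a" using bt t_def by simp
      have Ma': "?M *v a = (\<alpha> - \<beta> * t) *\<^sub>R a"
        using Ma unfolding bt' \<alpha>_def[symmetric] \<beta>_def[symmetric] by (simp add: algebra_simps)
      have Mb': "?M *v b = (\<beta> + \<alpha> * t) *\<^sub>R a"
        using Mb unfolding bt' \<alpha>_def[symmetric] \<beta>_def[symmetric] by (simp add: algebra_simps)
      have "?M *v b = (t * (\<alpha> - \<beta> * t)) *\<^sub>R a"
        unfolding bt' matrix_vector_mult_scaleR Ma' by simp
      then have "(\<beta> + \<alpha> * t) *\<^sub>R a = (t * \<alpha> - t * t * \<beta>) *\<^sub>R a"
        using Mb' by (simp add: algebra_simps)
      then have "\<beta> + \<alpha> * t = t * \<alpha> - t * t * \<beta>" using a0 by simp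
      then have "\<beta> * (1 + t * t) = 0" by (simp add: algebra_simps)
      moreover have "1 + t * t > 0" by (simp add: add_pos_nonneg)
      ultimately show False using False by simp
    qed
    define d where "d = p * s - r^2"
    have d0: "d > 0"
    proof -
      have "0 < (r *\<^sub>R a - p *\<^sub>R b) \<bullet> (r *\<^sub>R a - p *\<^sub>R b)" using nd by simp
      also have "\<dots> = p * d"
        by (simp add: d_def p_def r_def s_def inner_diff_left inner_diff_right inner_commute algebra_simps power2_eq_square)
      finally show ?thesis using p0 by (simp add: zero_less_mult_iff)
    qed
    have "\<forall>eta>0. \<not> ((\<lambda>t. msq_err lam eta J H q k (\<theta>s + a) \<theta>s t) \<longlonglongrightarrow> 0)"
    proof (intro allI impI notI)
      fix eta :: real assume eta: "eta > 0"
      assume lim: "(\<lambda>t. msq_err lam eta J H q k (\<theta>s + a) \<theta>s t) \<longlonglongrightarrow> 0"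
      define w where "w = (\<lambda>t. (1 - complex_of_real eta * \<mu>)^t)"
      have xs: "xseq lam eta a t = Re (w t) *\<^sub>R a - Im (w t) *\<^sub>R b" for t
      proof (induction t)
        case 0 then show ?case by (simp add: xseq_0 w_def)
      next
        case (Suc t)
        have wS: "w (Suc t) = w t * (1 - complex_of_real eta * \<mu>)" by (simp add: w_def)
        have re: "Re (w (Suc t)) = Re (w t) - eta * (Re (w t) * \<alpha> - Im (w t) * \<beta>)"
          unfolding wS by (simp add: \<alpha>_def \<beta>_def algebra_simps)
        have im: "Im (w (Suc t)) = Im (w t) - eta * (Re (w t) * \<beta> + Im (w t) * \<alpha>)"
          unfolding wS by (simp add: \<alpha>_def \<beta>_def algebra_simps)
        have Mx: "?M *v xseq lam eta a t = Re (w t) *\<^sub>R (\<alpha> *\<^sub>R a - \<beta> *\<^sub>R b) - Im (w t) *\<^sub>R (\<beta> *\<^sub>R a + \<alpha> *\<^sub>R b)"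
          unfolding Suc by (simp add: matrix_vector_mult_diff_distrib matrix_vector_mult_scaleR Ma Mb \<alpha>_def \<beta>_def)
        show ?case
          unfolding xseq_Suc Mx unfolding Suc re im
          by (simp add: algebra_simps)
      qed
      have xlim: "(\<lambda>t. xseq lam eta a t) \<longlonglongrightarrow> 0"
      proof -
        have "(\<lambda>t. (norm (xseq lam eta a t))^2) \<longlonglongrightarrow> 0"
        proof (rule tendsto_sandwich[OF _ _ tendsto_const lim])
          show "\<forall>\<^sub>F t in sequentially. 0 \<le> (norm (xseq lam eta a t))^2" by simp
          show "\<forall>\<^sub>F t in sequentially. (norm (xseq lam eta a t))^2 \<le> msq_err lam eta J H q k (\<theta>s + a) \<theta>s t"
            using msq_lower[of lam eta "\<theta>s + a"] by simp
        qed
        then have "(\<lambda>t. sqrt ((norm (xseq lam eta a t))^2)) \<longlonglongrightarrow> sqrt 0" by (rule tendsto_real_sqrt)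
        then have "(\<lambda>t. norm (xseq lam eta a t)) \<longlonglongrightarrow> 0" by simp
        then show ?thesis by (simp add: tendsto_norm_zero_iff)
      qed
      have la: "(\<lambda>t. a \<bullet> xseq lam eta a t) \<longlonglongrightarrow> 0" using tendsto_inner[OF tendsto_const xlim] by simp
      have lb: "(\<lambda>t. b \<bullet> xseq lam eta a t) \<longlonglongrightarrow> 0" using tendsto_inner[OF tendsto_const xlim] by simp
      have ReL: "(\<lambda>t. Re (w t)) \<longlonglongrightarrow> 0"
      proof -
        have h: "(\<lambda>t. s * (a \<bullet> xseq lam eta a t) - r * (b \<bullet> xseq lam eta a t)) \<longlonglongrightarrow> 0"
          using tendsto_diff[OF tendsto_mult[OF tendsto_const la] tendsto_mult[OF tendsto_const lb]] by simp
        have "(\<lambda>t. (s * (a \<bullet> xseq lam eta a t) - r * (b \<bullet> xseq lam eta a t)) / d) \<longlonglongrightarrow> 0 / d"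
          using d0 by (intro tendsto_divide[OF h tendsto_const]) auto
        moreover have "(s * (a \<bullet> xseq lam eta a t) - r * (b \<bullet> xseq lam eta a t)) / d = Re (w t)" for t
          using d0 unfolding xs
          by (simp add: inner_diff_right p_def r_def s_def d_def inner_commute field_simps power2_eq_square)
        ultimately show ?thesis by simp
      qed
      have ImL: "(\<lambda>t. Im (w t)) \<longlonglongrightarrow> 0"
      proof -
        have h: "(\<lambda>t. r * (a \<bullet> xseq lam eta a t) - p * (b \<bullet> xseq lam eta a t)) \<longlonglongrightarrow> 0"
          using tendsto_diff[OF tendsto_mult[OF tendsto_const la] tendsto_mult[OF tendsto_const lb]] by simp
        have "(\<lambda>t. (r * (a \<bullet> xseq lam eta a t) - p * (b \<bullet> xseq lam eta a t)) / d) \<longlonglongrightarrow> 0 / d"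
          using d0 by (intro tendsto_divide[OF h tendsto_const]) auto
        moreover have "(r * (a \<bullet> xseq lam eta a t) - p * (b \<bullet> xseq lam eta a t)) / d = Im (w t)" for t
          using d0 unfolding xs
          by (simp add: inner_diff_right p_def r_def s_def d_def inner_commute field_simps power2_eq_square)
        ultimately show ?thesis by simp
      qed
      have "(\<lambda>t. (Re (w t))^2 + (Im (w t))^2) \<longlonglongrightarrow> 0^2 + 0^2"
        by (intro tendsto_intros ReL ImL)
      moreover have "(Re (w t))^2 + (Im (w t))^2 \<ge> 1" for t
      proof -
        have c1: "cmod (1 - complex_of_real eta * \<mu>) \<ge> 1"
        proof -
          have "1 \<le> (1 - eta * \<alpha>)^2" using eta neg \<alpha>_def
            by (smt (verit) mult_pos_neg one_le_power power2_eq_square)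
          also have "\<dots> \<le> (1 - eta * \<alpha>)^2 + (eta * \<beta>)^2" by simp
          also have "\<dots> = (cmod (1 - complex_of_real eta * \<mu>))^2"
            by (simp add: cmod_power2 \<alpha>_def \<beta>_def)
          finally show ?thesis by (metis norm_ge_zero one_power2 power2_le_imp_le)
        qed
        have "1 \<le> (cmod (w t))^2" unfolding w_def norm_power
          using c1 by (simp add: one_le_power flip: power_mult)
        also have "\<dots> = (Re (w t))^2 + (Im (w t))^2" by (simp add: cmod_power2)
        finally show ?thesis .
      qed
      ultimately have "1 \<le> (0::real)^2 + 0^2" by (intro LIMSEQ_le_const) auto
      then show False by simp
    qed
    then show ?thesis by blast
  qed
qed

end

theorem proposition1:
  fixes J :: "real^'n::finite^'m::finite" and H :: "real^'m^'m"
    and q :: "real^'m" and c :: real and \<theta>s :: "real^'n" and k :: nat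
  assumes full_rank: "rank J = CARD('n)"
    and H_sym: "transpose H = H"
    and H_pd: "\<And>x. x \<noteq> 0 \<Longrightarrow> x \<bullet> (H *v x) > 0"
    and opt: "\<And>v. quad_loss H q c (J *v \<theta>s) \<le> quad_loss H q c v"
    and range_incl: "range (\<lambda>x. (H ** J) *v x) \<subseteq> range (\<lambda>x. J *v x)"
    and k_pos: "1 \<le> k" and k_le: "k \<le> CARD('m)"
  shows "(\<forall>lam \<ge> 0. xi J H k lam < 0 \<longrightarrow>
            (\<exists>\<theta>0. \<forall>eta > 0.
               \<not> ((\<lambda>t. msq_err lam eta J H q k \<theta>0 \<theta>s t) \<longlonglongrightarrow> 0)))
       \<and> (\<exists>lam0 \<ge> 0. \<forall>lam > lam0. xi J H k lam > 0 \<and>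
            (\<exists>eta0 > 0. \<forall>eta. 0 < eta \<and> eta < eta0 \<longrightarrow>
               (\<forall>\<theta>0. (\<lambda>t. msq_err lam eta J H q k \<theta>0 \<theta>s t) \<longlonglongrightarrow> 0)))"
proof -
  interpret sngd J H q c \<theta>s k
    using assms unfolding sngd_def by blast
  show ?thesis using part1 part2 by blast
qed

end
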